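(* Let $\dot x$ be a hereditarily symmetric name for a subset of $\omega$, supported by a countable $\rho$-closed set $A\subseteq\omega_1$. Then there exists a rank-$1$ packet scheme $\mathfrak S$ over $A$ (i.e. with first coordinate $A$) such that $\Vdash\dot x=\dot x_{\mathfrak S}$.
   Context: $\rho:\omega_1\setminus\{0\}\to\omega_1$ is the generic regressive map added by finite partial regressive functions; $\operatorname{Succ}_\rho(\xi)=\{\eta:\rho(\eta)=\xi\}$; a set is $\rho$-closed if closed under $\rho$, $\operatorname{cl}_\rho(A)$ the least $\rho$-closed superset. $\mathbb P_1=\operatorname{Fn}(\omega_1\times\omega\times\omega,2,{<}\omega)$. For $\xi<\omega_1,i<\omega$, $s\subseteq\omega$ finite or cofinite, $\tau^{\mathrm{1cas}}_{\xi,i,s}$ flips the value of a condition at each coordinate $(\zeta,i,n)$ with $n\in s$ and $\zeta\in\{\xi\}\cup\operatorname{Succ}_\rho(\xi)$; $\mathscr G^{\mathrm{1cas}}_\rho$ is the group they generate; $\operatorname{Fix}^{\mathrm{1cas}}_\rho(A)$ is the subgroup acting trivially on coordinates $(\zeta,j,n)$ with $\zeta\in\operatorname{cl}_\rho(A)$; $\mathscr F^{\mathrm{1cas}}_\rho$ is the filter of subgroups generated by these for countable $A$; hereditarily symmetric names are with respect to $(\mathbb P_1,\mathscr G^{\mathrm{1cas}}_\rho,\mathscr F^{\mathrm{1cas}}_\rho)$; a name is supported by $A$ if fixed by $\operatorname{Fix}^{\mathrm{1cas}}_\rho(A)$. A name for a subset of $\omega$ is one all of whose members are pairs $(\check m,r)$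 with $m\in\omega$, $r\in\mathbb P_1$. An exact finite cascade packet is a condition $r\in\mathbb P_1$ whose node-support $\{\xi:\exists i,n\ r(\xi,i,n)\text{ defined}\}$ is finite and $\rho$-closed. A rank-$1$ packet scheme is $\mathfrak S=(A,\langle\mathcal C_m:m<\omega\rangle)$ with $A$ countable $\rho$-closed and each $\mathcal C_m$ a countable family of exact finite cascade packets with node-support $\subseteq A$; $\dot x_{\mathfrak S}=\{(\check m,r):m<\omega, r\in\mathcal C_m\}$. *)

theory Defs
  imports Main "HOL-Library.Countable_Set"
begin

text \<open>A model of \<omega>_1: an uncountable well-order all of whose proper initial
segments are countable; its least element plays the role of 0.\<close>
class omega1 = wellorder + order_bot +
  assumes omega1_uncountable: "uncountable (UNIV :: 'a set)"
  and omega1_countable_below: "countable {..<x}"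

definition regressive :: "('o::omega1 \<Rightarrow> 'o) \<Rightarrow> bool" where
  "regressive \<rho> \<longleftrightarrow> (\<forall>\<xi>. \<xi> \<noteq> bot \<longrightarrow> \<rho> \<xi> < \<xi>)"

definition Succ :: "('o::omega1 \<Rightarrow> 'o) \<Rightarrow> 'o \<Rightarrow> 'o set" where
  "Succ \<rho> \<xi> = {\<eta>. \<eta> \<noteq> bot \<and> \<rho> \<eta> = \<xi>}"

definition rho_closed :: "('o::omega1 \<Rightarrow> 'o) \<Rightarrow> 'o set \<Rightarrow> bool" where
  "rho_closed \<rho> A \<longleftrightarrow> (\<forall>\<xi>\<in>A. \<xi> \<noteq> bot \<longrightarrow> \<rho> \<xi> \<in> A)"

definition cl :: "('o::omega1 \<Rightarrow> 'o) \<Rightarrow> 'o set \<Rightarrow> 'o set" where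
  "cl \<rho> A = \<Inter>{B. A \<subseteq> B \<and> rho_closed \<rho> B}"

text \<open>Conditions of P_1 = Fn(\<omega>_1 \<times> \<omega> \<times> \<omega>, 2, <\<omega>): finite partial functions.\<close>
type_synonym 'o cond = "'o \<times> nat \<times> nat \<Rightarrow> bool option"

definition P1 :: "'o cond set" where
  "P1 = {r. finite (dom r)}"

definition cle :: "'o cond \<Rightarrow> 'o cond \<Rightarrow> bool" where
  "cle q p \<longleftrightarrow> p \<subseteq>\<^sub>m q"

definition finite_or_cofinite :: "nat set \<Rightarrow> bool" where
  "finite_or_cofinite s \<longleftrightarrow> finite s \<or> finite (- s)"

definition tau :: "('o::omega1 \<Rightarrow> 'o) \<Rightarrow> 'o \<Rightarrow> nat \<Rightarrow> nat set \<Rightarrow> 'o cond \<Rightarrow> 'o cond" where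
  "tau \<rho> \<xi> i s r = (\<lambda>(\<zeta>, j, n).
     if j = i \<and> n \<in> s \<and> \<zeta> \<in> {\<xi>} \<union> Succ \<rho> \<xi> then map_option Not (r (\<zeta>, j, n)) else r (\<zeta>, j, n))"

text \<open>The group generated by the generators (each generator is an involution,
so the generated group is the closure of the identity under left
composition with generators).\<close>
inductive_set G1cas :: "('o::omega1 \<Rightarrow> 'o) \<Rightarrow> ('o cond \<Rightarrow> 'o cond) set" for \<rho> where
  G_id: "id \<in> G1cas \<rho>"
| G_step: "\<pi> \<in> G1cas \<rho> \<Longrightarrow> finite_or_cofinite s \<Longrightarrow> tau \<rho> \<xi> i s \<circ> \<pi> \<in> G1cas \<rho>"

definition Fix :: "('o::omega1 \<Rightarrow> 'o) \<Rightarrow> 'o set \<Rightarrow> ('o cond \<Rightarrow> 'o cond) set" where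
  "Fix \<rho> A = {\<pi> \<in> G1cas \<rho>. \<forall>r \<zeta> j n. \<zeta> \<in> cl \<rho> A \<longrightarrow> \<pi> r (\<zeta>, j, n) = r (\<zeta>, j, n)}"

text \<open>Names for subsets of \<omega>: sets of pairs (m-check, r), m \<in> \<omega>, r \<in> P_1.\<close>
type_synonym 'o nat_name = "(nat \<times> 'o cond) set"

definition is_nat_name :: "'o nat_name \<Rightarrow> bool" where
  "is_nat_name x \<longleftrightarrow> (\<forall>(m, r)\<in>x. r \<in> P1)"

definition act :: "('o cond \<Rightarrow> 'o cond) \<Rightarrow> 'o nat_name \<Rightarrow> 'o nat_name" where
  "act \<pi> x = (\<lambda>(m, r). (m, \<pi> r)) ` x"

definition supported_by :: "('o::omega1 \<Rightarrow> 'o) \<Rightarrow> 'o set \<Rightarrow> 'o nat_name \<Rightarrow> bool" where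
  "supported_by \<rho> A x \<longleftrightarrow> (\<forall>\<pi>\<in>Fix \<rho> A. act \<pi> x = x)"

definition in_filter :: "('o::omega1 \<Rightarrow> 'o) \<Rightarrow> ('o cond \<Rightarrow> 'o cond) set \<Rightarrow> bool" where
  "in_filter \<rho> H \<longleftrightarrow> H \<subseteq> G1cas \<rho> \<and> (\<exists>A. countable A \<and> Fix \<rho> A \<subseteq> H)"

text \<open>Hereditarily symmetric name for a subset of \<omega> (the check names m-check
are trivially hereditarily symmetric).\<close>
definition HS_nat_name :: "('o::omega1 \<Rightarrow> 'o) \<Rightarrow> 'o nat_name \<Rightarrow> bool" where
  "HS_nat_name \<rho> x \<longleftrightarrow> is_nat_name x \<and> in_filter \<rho> {\<pi> \<in> G1cas \<rho>. act \<pi> x = x}"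

definition forces_mem :: "'o cond \<Rightarrow> nat \<Rightarrow> 'o nat_name \<Rightarrow> bool" where
  "forces_mem p m x \<longleftrightarrow> (\<forall>q\<in>P1. cle q p \<longrightarrow> (\<exists>q'\<in>P1. cle q' q \<and> (\<exists>r. (m, r) \<in> x \<and> cle q' r)))"

text \<open>The empty condition forces x = y.\<close>
definition forces_eq :: "'o nat_name \<Rightarrow> 'o nat_name \<Rightarrow> bool" where
  "forces_eq x y \<longleftrightarrow> (\<forall>(m, p)\<in>x. forces_mem p m y) \<and> (\<forall>(m, p)\<in>y. forces_mem p m x)"

definition node_support :: "'o cond \<Rightarrow> 'o set" where
  "node_support r = {\<xi>. \<exists>i n. r (\<xi>, i, n) \<noteq> None}"

definition exact_packet :: "('o::omega1 \<Rightarrow> 'o) \<Rightarrow> 'o cond \<Rightarrow> bool" where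
  "exact_packet \<rho> r \<longleftrightarrow> r \<in> P1 \<and> finite (node_support r) \<and> rho_closed \<rho> (node_support r)"

definition packet_scheme :: "('o::omega1 \<Rightarrow> 'o) \<Rightarrow> 'o set \<times> (nat \<Rightarrow> 'o cond set) \<Rightarrow> bool" where
  "packet_scheme \<rho> S \<longleftrightarrow> countable (fst S) \<and> rho_closed \<rho> (fst S) \<and>
     (\<forall>m. countable (snd S m) \<and> (\<forall>r\<in>snd S m. exact_packet \<rho> r \<and> node_support r \<subseteq> fst S))"

definition scheme_name :: "'o set \<times> (nat \<Rightarrow> 'o cond set) \<Rightarrow> 'o nat_name" where
  "scheme_name S = {(m, r). r \<in> snd S m}"

end

theory Submission
  imports Defs
begin

definition flipc :: "('o \<times> nat \<times> nat \<Rightarrow> bool) \<Rightarrow> 'o cond \<Rightarrow> 'o cond" where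
  "flipc \<phi> r = (\<lambda>c. if \<phi> c then map_option Not (r c) else r c)"

lemma tau_flipc: "tau \<rho> \<xi> i s = flipc (\<lambda>(\<zeta>,j,n). j = i \<and> n \<in> s \<and> \<zeta> \<in> {\<xi>} \<union> Succ \<rho> \<xi>)"
  by (auto simp: tau_def flipc_def fun_eq_iff)

lemma flipc_comp: "flipc \<phi> \<circ> flipc \<psi> = flipc (\<lambda>c. \<phi> c \<noteq> \<psi> c)"
  by (auto simp: flipc_def fun_eq_iff option.map_comp o_def option.map_ident)

lemma flipc_flipc: "flipc \<phi> (flipc \<phi> r) = r"
  by (auto simp: flipc_def fun_eq_iff option.map_comp o_def option.map_ident)

lemma dom_flipc: "dom (flipc \<phi> r) = dom r"
  by (auto simp: flipc_def dom_def)

lemma flipc_mono: "p \<subseteq>\<^sub>m q \<Longrightarrow> flipc \<phi> p \<subseteq>\<^sub>m flipc \<phi> q"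
  by (auto simp: map_le_def flipc_def dom_def)

lemma exists_flip:
  fixes \<rho> :: "'o::omega1 \<Rightarrow> 'o"
  assumes reg: "regressive \<rho>" and clA: "rho_closed \<rho> A"
  shows "finite D \<Longrightarrow> (\<forall>c\<in>D. fst c \<notin> A) \<Longrightarrow>
    \<exists>\<phi>. flipc \<phi> \<in> G1cas \<rho> \<and> (\<forall>c. fst c \<in> A \<longrightarrow> \<not> \<phi> c) \<and> (\<forall>c\<in>D. \<phi> c \<longleftrightarrow> c \<in> T)"
proof (induction D arbitrary: T rule: finite_ranking_induct[where f=fst])
  case empty
  have "flipc (\<lambda>_. False) = id" by (auto simp: flipc_def fun_eq_iff)
  then have "flipc (\<lambda>_. False) \<in> G1cas \<rho>" using G1cas.G_id by metis
  then show ?case by (intro exI[of _ "\<lambda>_. False"]) auto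
next
  case (insert x S)
  obtain \<phi>0 where h0: "flipc \<phi>0 \<in> G1cas \<rho>" "\<forall>c. fst c \<in> A \<longrightarrow> \<not> \<phi>0 c" "\<forall>c\<in>S. \<phi>0 c \<longleftrightarrow> c \<in> T"
    using insert.IH[of T] insert.prems by auto
  show ?case
  proof (cases "\<phi>0 x \<longleftrightarrow> x \<in> T")
    case True
    then show ?thesis using h0 by (intro exI[of _ \<phi>0]) auto
  next
    case False
    obtain \<zeta> j n where x: "x = (\<zeta>, j, n)" by (cases x) auto
    have zA: "\<zeta> \<notin> A" using insert.prems x by auto
    define \<psi> where "\<psi> = (\<lambda>(\<zeta>',j',n'). j' = j \<and> n' \<in> {n} \<and> \<zeta>' \<in> {\<zeta>} \<union> Succ \<rho> \<zeta>)"
    have fin: "finite_or_cofinite {n}" by (simp add: finite_or_cofinite_def)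
    have G: "flipc (\<lambda>c. \<psi> c \<noteq> \<phi>0 c) \<in> G1cas \<rho>"
      using G1cas.G_step[OF h0(1) fin, of \<zeta> j] unfolding tau_flipc flipc_comp \<psi>_def .
    have nS: "\<not> \<psi> c" if "c \<in> S" for c
    proof
      assume p: "\<psi> c"
      obtain \<zeta>' j' n' where c: "c = (\<zeta>', j', n')" by (cases c) auto
      have le: "\<zeta>' \<le> \<zeta>" using insert.hyps(2)[OF that] c x by simp
      from p c have "j' = j" "n' = n" "\<zeta>' = \<zeta> \<or> \<zeta>' \<in> Succ \<rho> \<zeta>" by (auto simp: \<psi>_def)
      moreover have "\<zeta>' \<noteq> \<zeta>" using that c x \<open>j' = j\<close> \<open>n' = n\<close> h0(3) False by auto
      ultimately have "\<zeta>' \<noteq> bot" "\<rho> \<zeta>' = \<zeta>" by (auto simp: Succ_def)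
      then have "\<zeta> < \<zeta>'" using reg by (auto simp: regressive_def)
      then show False using le by simp
    qed
    have nA: "\<not> \<psi> c" if "fst c \<in> A" for c
    proof
      assume p: "\<psi> c"
      obtain \<zeta>' j' n' where c: "c = (\<zeta>', j', n')" by (cases c) auto
      from p c have "\<zeta>' = \<zeta> \<or> \<zeta>' \<in> Succ \<rho> \<zeta>" by (auto simp: \<psi>_def)
      then show False using zA that c clA by (auto simp: Succ_def rho_closed_def)
    qed
    have px: "\<psi> x" using x by (simp add: \<psi>_def)
    show ?thesis
    proof (intro exI[of _ "\<lambda>c. \<psi> c \<noteq> \<phi>0 c"] conjI G allI impI ballI)
      fix c :: "'o \<times> nat \<times> nat" assume "fst c \<in> A"
      then show "\<not> (\<psi> c \<noteq> \<phi>0 c)" using h0(2) nA by blast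
    next
      fix c :: "'o \<times> nat \<times> nat" assume "c \<in> insert x S"
      then show "(\<psi> c \<noteq> \<phi>0 c) = (c \<in> T)"
      proof
        assume "c = x" then show ?thesis using px False by simp
      next
        assume cS: "c \<in> S" then show ?thesis using nS[OF cS] h0(3) by simp
      qed
    qed
  qed
qed


lemma closure_one:
  fixes \<rho> :: "'o::omega1 \<Rightarrow> 'o"
  assumes reg: "regressive \<rho>" and clA: "rho_closed \<rho> A"
  shows "\<xi> \<in> A \<Longrightarrow> \<exists>F. finite F \<and> \<xi> \<in> F \<and> F \<subseteq> A \<and> rho_closed \<rho> F"
proof (induction \<xi> rule: less_induct)
  case (less \<xi>)
  show ?case
  proof (cases "\<xi> = bot")
    case True
    then show ?thesis using less.prems by (intro exI[of _ "{\<xi>}"]) (auto simp: rho_closed_def)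
  next
    case False
    then have lt: "\<rho> \<xi> < \<xi>" and inA: "\<rho> \<xi> \<in> A" using reg clA less.prems
      by (auto simp: regressive_def rho_closed_def)
    obtain F where F: "finite F" "\<rho> \<xi> \<in> F" "F \<subseteq> A" "rho_closed \<rho> F" using less.IH[OF lt inA] by blast
    show ?thesis using F less.prems by (intro exI[of _ "insert \<xi> F"]) (auto simp: rho_closed_def)
  qed
qed

lemma closure_fin:
  fixes \<rho> :: "'o::omega1 \<Rightarrow> 'o"
  assumes reg: "regressive \<rho>" and clA: "rho_closed \<rho> A"
  shows "finite N \<Longrightarrow> N \<subseteq> A \<Longrightarrow> \<exists>F. finite F \<and> N \<subseteq> F \<and> F \<subseteq> A \<and> rho_closed \<rho> F"
proof (induction N rule: finite_induct)
  case empty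
  then show ?case by (intro exI[of _ "{}"]) (auto simp: rho_closed_def)
next
  case (insert \<xi> N)
  obtain F where F: "finite F" "N \<subseteq> F" "F \<subseteq> A" "rho_closed \<rho> F" using insert by auto
  obtain F' where F': "finite F'" "\<xi> \<in> F'" "F' \<subseteq> A" "rho_closed \<rho> F'"
    using closure_one[OF reg clA, of \<xi>] insert.prems by blast
  show ?case using F F' by (intro exI[of _ "F \<union> F'"]) (auto simp: rho_closed_def)
qed

lemma countable_fin_maps:
  assumes "countable B"
  shows "countable {r :: 'a \<Rightarrow> bool option. finite (dom r) \<and> dom r \<subseteq> B}"
proof (rule countable_image_inj_on)
  let ?g = "\<lambda>r :: 'a \<Rightarrow> bool option. {(c, b). r c = Some b}"
  have "?g ` {r. finite (dom r) \<and> dom r \<subseteq> B} \<subseteq> {G. finite G \<and> G \<subseteq> B \<times> UNIV}"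
  proof clarify
    fix r :: "'a \<Rightarrow> bool option" assume r: "finite (dom r)" "dom r \<subseteq> B"
    have "?g r \<subseteq> dom r \<times> UNIV" by auto
    moreover have "finite (dom r \<times> (UNIV :: bool set))" using r by auto
    ultimately show "finite (?g r) \<and> ?g r \<subseteq> B \<times> UNIV" using r finite_subset by blast
  qed
  moreover have "countable {G. finite G \<and> G \<subseteq> B \<times> (UNIV :: bool set)}"
    by (rule countable_Collect_finite_subset) (use assms in auto)
  ultimately show "countable (?g ` {r. finite (dom r) \<and> dom r \<subseteq> B})" using countable_subset by blast
  show "inj_on ?g {r. finite (dom r) \<and> dom r \<subseteq> B}"
  proof (rule inj_onI)
    fix r1 r2 :: "'a \<Rightarrow> bool option" assume "?g r1 = ?g r2"
    then have "\<forall>c b. r1 c = Some b \<longleftrightarrow> r2 c = Some b" by (auto simp: set_eq_iff)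
    then show "r1 = r2" by (metis option.exhaust ext)
  qed
qed

theorem theorem4p5:
  fixes \<rho> :: "'o::omega1 \<Rightarrow> 'o" and A :: "'o set" and x :: "'o nat_name"
  assumes "regressive \<rho>"
    and "HS_nat_name \<rho> x"
    and "countable A" and "rho_closed \<rho> A"
    and "supported_by \<rho> A x"
  shows "\<exists>S. packet_scheme \<rho> S \<and> fst S = A \<and> forces_eq x (scheme_name S)"
proof -
  note reg = assms(1) and cA = assms(3) and clA = assms(4) and sup = assms(5)
  define C where "C = (\<lambda>m. {r. exact_packet \<rho> r \<and> node_support r \<subseteq> A \<and> forces_mem r m x})"
  define S where "S = (A, C)"
  have clsub: "cl \<rho> A \<subseteq> A" using clA by (auto simp: cl_def)
  have ns_dom: "dom r \<subseteq> node_support r \<times> UNIV" for r :: "'o cond"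
    by (auto simp: node_support_def dom_def)
  have countC: "countable (C m)" for m
  proof -
    have "C m \<subseteq> {r. finite (dom r) \<and> dom r \<subseteq> A \<times> UNIV}"
    proof clarify
      fix r assume "r \<in> C m"
      then have "finite (dom r)" "node_support r \<subseteq> A" by (auto simp: C_def exact_packet_def P1_def)
      then show "finite (dom r) \<and> dom r \<subseteq> A \<times> UNIV" using ns_dom[of r] by auto
    qed
    moreover have "countable (A \<times> (UNIV :: (nat \<times> nat) set))" using cA by auto
    ultimately show ?thesis using countable_fin_maps countable_subset by blast
  qed
  have ps: "packet_scheme \<rho> S" using cA clA countC by (auto simp: packet_scheme_def S_def C_def)
  have dir2: "\<forall>(m, p)\<in>scheme_name S. forces_mem p m x"
    by (auto simp: scheme_name_def S_def C_def)
  have dir1: "forces_mem p m (scheme_name S)" if mp: "(m, p) \<in> x" for m p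
    unfolding forces_mem_def
  proof (intro ballI impI)
    fix q assume qP: "q \<in> P1" and qp: "cle q p"
    define N where "N = node_support q \<inter> A"
    have "finite (node_support q)"
    proof -
      have "node_support q \<subseteq> fst ` dom q"
      proof
        fix \<xi> assume "\<xi> \<in> node_support q"
        then obtain i n where "q (\<xi>, i, n) \<noteq> None" by (auto simp: node_support_def)
        then show "\<xi> \<in> fst ` dom q" by (intro image_eqI[of _ _ "(\<xi>, i, n)"]) auto
      qed
      moreover have "finite (fst ` dom q)" using qP by (simp add: P1_def)
      ultimately show ?thesis by (rule finite_subset)
    qed
    then have fN: "finite N" by (simp add: N_def)
    have NA: "N \<subseteq> A" by (simp add: N_def)
    obtain F where F: "finite F" "N \<subseteq> F" "F \<subseteq> A" "rho_closed \<rho> F"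
      using closure_fin[OF reg clA fN NA] by blast
    define q' where "q' = (\<lambda>c. if fst c \<in> F \<and> snd c = (0,0) \<and> q c = None then Some True else q c)"
    have domq': "dom q' \<subseteq> dom q \<union> F \<times> {(0,0)}" by (auto simp: q'_def dom_def)
    have q'P: "q' \<in> P1" using domq' qP F(1) by (auto simp: P1_def intro: finite_subset)
    have qq': "q \<subseteq>\<^sub>m q'" by (auto simp: map_le_def q'_def)
    define r where "r = q' |` {c. fst c \<in> A}"
    have nsr: "node_support r = F"
    proof
      show "node_support r \<subseteq> F"
      proof
        fix \<xi> assume "\<xi> \<in> node_support r"
        then obtain i n where "r (\<xi>, i, n) \<noteq> None" by (auto simp: node_support_def)
        then have "\<xi> \<in> A" "q' (\<xi>, i, n) \<noteq> None" by (auto simp: r_def restrict_map_def split: if_splits)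
        then show "\<xi> \<in> F" using F(2) by (auto simp: q'_def N_def node_support_def split: if_splits)
      qed
      show "F \<subseteq> node_support r"
      proof
        fix \<xi> assume "\<xi> \<in> F"
        then have "r (\<xi>, 0, 0) \<noteq> None" using F(3) by (auto simp: r_def q'_def restrict_map_def)
        then show "\<xi> \<in> node_support r" by (auto simp: node_support_def)
      qed
    qed
    have rq': "r \<subseteq>\<^sub>m q'" by (auto simp: r_def map_le_def)
    have rP: "r \<in> P1" using q'P by (auto simp: r_def P1_def intro: finite_subset)
    have rforces: "forces_mem r m x"
      unfolding forces_mem_def
    proof (intro ballI impI)
      fix s assume sP: "s \<in> P1" and sr: "cle s r"
      define D where "D = {c \<in> dom s \<inter> dom q'. fst c \<notin> A}"
      define T where "T = {c \<in> D. s c \<noteq> q' c}"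
      have "finite D" using sP by (auto simp: D_def P1_def)
      moreover have Dn: "\<forall>c\<in>D. fst c \<notin> A" by (simp add: D_def)
      ultimately obtain \<phi> where \<phi>: "flipc \<phi> \<in> G1cas \<rho>" "\<forall>c. fst c \<in> A \<longrightarrow> \<not> \<phi> c" "\<forall>c\<in>D. \<phi> c \<longleftrightarrow> c \<in> T"
        using exists_flip[OF reg clA, of D T] by blast
      let ?\<pi> = "flipc \<phi>"
      have \<pi>Fix: "?\<pi> \<in> Fix \<rho> A" using \<phi> clsub by (auto simp: Fix_def flipc_def)
      have act: "act ?\<pi> x = x" using sup \<pi>Fix by (auto simp: supported_by_def)
      have compat: "?\<pi> s c = q' c" if "?\<pi> s c \<noteq> None" "q' c \<noteq> None" for c
      proof (cases "fst c \<in> A")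
        case True
        then have "\<not> \<phi> c" using \<phi>(2) by blast
        then have "?\<pi> s c = s c" by (simp add: flipc_def)
        moreover have "r c = q' c" using True by (simp add: r_def)
        moreover have "s c = r c"
        proof -
          have "r c \<noteq> None" using that(2) True by (simp add: r_def)
          then have cr: "c \<in> dom r" by blast
          have "\<forall>a\<in>dom r. r a = s a" using sr by (simp add: cle_def map_le_def)
          then have "r c = s c" using cr by blast
          then show ?thesis by simp
        qed
        ultimately show ?thesis by simp
      next
        case False
        have "c \<in> dom (?\<pi> s)" using that(1) by blast
        then have "s c \<noteq> None" by (simp add: dom_flipc domIff)
        then have cD: "c \<in> D" using that False by (auto simp: D_def)
        show ?thesis
        proof (cases "s c = q' c")
          case True
          then show ?thesis using \<phi>(3) cD by (simp add: flipc_def T_def)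
        next
          case ne: False
          then have "\<phi> c" using \<phi>(3) cD by (simp add: T_def)
          moreover obtain b1 b2 where "s c = Some b1" "q' c = Some b2"
            using \<open>s c \<noteq> None\<close> \<open>q' c \<noteq> None\<close> by auto
          ultimately show ?thesis using ne by (cases b1; cases b2) (auto simp: flipc_def)
        qed
      qed
      define u where "u = (\<lambda>c. case ?\<pi> s c of None \<Rightarrow> q' c | Some b \<Rightarrow> Some b)"
      have q'u: "q' \<subseteq>\<^sub>m u"
        unfolding map_le_def
      proof
        fix c assume "c \<in> dom q'"
        then have qn: "q' c \<noteq> None" by blast
        show "q' c = u c"
        proof (cases "?\<pi> s c")
          case None
          then show ?thesis by (simp add: u_def)
        next
          case (Some b)
          then have "?\<pi> s c = q' c" using compat[of c] qn by simp
          then show ?thesis using Some by (simp add: u_def split: option.split)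
        qed
      qed
      have su: "?\<pi> s \<subseteq>\<^sub>m u"
        unfolding map_le_def u_def by (auto split: option.splits)
      have "dom u \<subseteq> dom (?\<pi> s) \<union> dom q'" by (auto simp: u_def split: option.splits)
      then have uP: "u \<in> P1" using sP q'P by (auto simp: P1_def dom_flipc intro: finite_subset)
      have "(m, ?\<pi> p) \<in> act ?\<pi> x" unfolding act_def by (rule image_eqI[where x="(m,p)"]) (simp_all add: mp)
      then have mx: "(m, ?\<pi> p) \<in> x" using act by simp
      have "p \<subseteq>\<^sub>m u" using qp qq' q'u by (auto simp: cle_def intro: map_le_trans)
      then have pu: "?\<pi> p \<subseteq>\<^sub>m ?\<pi> u" by (rule flipc_mono)
      have "s \<subseteq>\<^sub>m ?\<pi> u" using flipc_mono[OF su, of \<phi>] by (simp add: flipc_flipc)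
      moreover have "?\<pi> u \<in> P1" using uP by (simp add: P1_def dom_flipc)
      ultimately show "\<exists>q'\<in>P1. cle q' s \<and> (\<exists>r. (m, r) \<in> x \<and> cle q' r)"
        using mx pu by (auto simp: cle_def)
    qed
    have ep: "exact_packet \<rho> r" using rP nsr F by (simp add: exact_packet_def)
    have "r \<in> C m" using ep nsr F rforces by (simp add: C_def)
    then have "(m, r) \<in> scheme_name S" by (simp add: scheme_name_def S_def)
    moreover have "cle q' q" using qq' by (simp add: cle_def)
    moreover have "cle q' r" using rq' by (simp add: cle_def)
    ultimately show "\<exists>q'a\<in>P1. cle q'a q \<and> (\<exists>ra. (m, ra) \<in> scheme_name S \<and> cle q'a ra)"
      using q'P map_le_refl[of q'] by (auto simp: cle_def)
  qed
  have "forces_eq x (scheme_name S)"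
    unfolding forces_eq_def using dir1 dir2 by auto
  then show ?thesis using ps by (auto simp: S_def)
qed

end
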